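(* If an $n$-agent network is $k$-redundant with $k\ge 1$, then $$\mathcal X^*=\bigcap_{i=1}^n\{x\in\mathbb R^d: A_i^\top A_ix=A_i^\top b_i\}.$$
   Context: An $n$-agent network: agents $\mathcal V=\{1,\dots,n\}$, each agent $i$ having real matrices $A_i\in\mathbb R^{r_i\times d}$, $b_i\in\mathbb R^{r_i}$; $A$, $b$ are the vertical stackings of the $A_i$, $b_i$, and $\mathcal X^*=\arg\min_x\|Ax-b\|_2^2=\arg\min_x\sum_{i=1}^n\|A_ix-b_i\|_2^2$. The network is $k$-redundant ($k\in\{0,1,\dots,n-1\}$) if for any $\mathcal S_1,\mathcal S_2\subset\mathcal V$ with $|\mathcal S_1|=|\mathcal S_2|=n-k$, $\arg\min_x\sum_{i\in\mathcal S_1}\|A_ix-b_i\|_2^2=\arg\min_x\sum_{i\in\mathcal S_2}\|A_ix-b_i\|_2^2$. *)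

theory Defs
  imports Complex_Main "Jordan_Normal_Form.Matrix"
begin

definition sqn :: "real vec \<Rightarrow> real" where
  "sqn v = v \<bullet> v"

definition cost :: "(nat \<Rightarrow> real mat) \<Rightarrow> (nat \<Rightarrow> real vec) \<Rightarrow> nat set \<Rightarrow> real vec \<Rightarrow> real" where
  "cost A b S x = (\<Sum>i\<in>S. sqn (A i *\<^sub>v x - b i))"

definition argmin_set :: "nat \<Rightarrow> (real vec \<Rightarrow> real) \<Rightarrow> real vec set" where
  "argmin_set d f = {x \<in> carrier_vec d. \<forall>y \<in> carrier_vec d. f x \<le> f y}"

definition k_redundant :: "nat \<Rightarrow> nat \<Rightarrow> (nat \<Rightarrow> real mat) \<Rightarrow> (nat \<Rightarrow> real vec) \<Rightarrow> nat \<Rightarrow> bool" where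
  "k_redundant n d A b k \<longleftrightarrow>
     (\<forall>S1 S2. S1 \<subseteq> {1..n} \<and> S2 \<subseteq> {1..n} \<and> card S1 = n - k \<and> card S2 = n - k \<longrightarrow>
        argmin_set d (cost A b S1) = argmin_set d (cost A b S2))"

end

theory Submission
  imports Defs
begin


lemma sp_self_ge0: "(v::real vec) \<bullet> v \<ge> 0"
  unfolding scalar_prod_def by (auto intro: sum_nonneg)

lemma sp_self_eq0: assumes "v \<in> carrier_vec n" "(v::real vec) \<bullet> v = 0" shows "v = 0\<^sub>v n"
proof (rule eq_vecI)
  show "dim_vec v = dim_vec (0\<^sub>v n)" using assms by auto
  fix i assume "i < dim_vec (0\<^sub>v n)"
  hence i: "i < dim_vec v" using assms by auto
  have "\<forall>j\<in>{0..<dim_vec v}. v $ j * v $ j = 0"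
    using assms(2) unfolding scalar_prod_def
    by (subst sum_nonneg_eq_0_iff[symmetric]) auto
  with i show "v $ i = 0\<^sub>v n $ i" using assms by auto
qed

lemma key_orth:
  fixes M :: "real mat"
  assumes M: "M \<in> carrier_mat r d" and y: "y \<in> carrier_vec d" and w: "w \<in> carrier_vec r"
    and ysupp: "\<And>j. m \<le> j \<Longrightarrow> j < d \<Longrightarrow> y $ j = 0"
    and worth: "\<And>j. j < m \<Longrightarrow> col M j \<bullet> w = 0"
  shows "(M *\<^sub>v y) \<bullet> w = 0"
proof -
  have "(M *\<^sub>v y) \<bullet> w = w \<bullet> (M *\<^sub>v y)" using M y w by (intro comm_scalar_prod) auto
  also have "\<dots> = (transpose_mat M *\<^sub>v w) \<bullet> y"
    using transpose_vec_mult_scalar[OF M y w] by simp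
  also have "\<dots> = (\<Sum>j\<in>{0..<d}. (transpose_mat M *\<^sub>v w) $ j * y $ j)"
    unfolding scalar_prod_def using y by auto
  also have "\<dots> = 0"
  proof (rule sum.neutral, intro ballI)
    fix j assume j: "j \<in> {0..<d}"
    show "(transpose_mat M *\<^sub>v w) $ j * y $ j = 0"
    proof (cases "j < m")
      case True
      have "(transpose_mat M *\<^sub>v w) $ j = col M j \<bullet> w" using M j by auto
      with worth[OF True] show ?thesis by simp
    next
      case False then show ?thesis using ysupp j by auto
    qed
  qed
  finally show ?thesis .
qed

lemma ls_aux:
  fixes M :: "real mat"
  assumes M: "M \<in> carrier_mat r d"
  shows "m \<le> d \<Longrightarrow> c \<in> carrier_vec r \<Longrightarrow> \<exists>x\<in>carrier_vec d. (\<forall>j. m \<le> j \<longrightarrow> j < d \<longrightarrow> x $ j = 0) \<and> (\<forall>j<m. col M j \<bullet> (c - M *\<^sub>v x) = 0)"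
proof (induction m arbitrary: c)
  case 0
  show ?case by (intro bexI[of _ "0\<^sub>v d"]) auto
next
  case (Suc m)
  have md: "m < d" using Suc by auto
  from Suc.IH[of c] Suc.prems obtain x where x: "x \<in> carrier_vec d"
    and xs: "\<And>j. m \<le> j \<Longrightarrow> j < d \<Longrightarrow> x $ j = 0"
    and xo: "\<And>j. j < m \<Longrightarrow> col M j \<bullet> (c - M *\<^sub>v x) = 0" by auto
  have cm: "col M m \<in> carrier_vec r" using M md by auto
  from Suc.IH[of "col M m"] Suc.prems cm obtain q where q: "q \<in> carrier_vec d"
    and qs: "\<And>j. m \<le> j \<Longrightarrow> j < d \<Longrightarrow> q $ j = 0"
    and qo: "\<And>j. j < m \<Longrightarrow> col M j \<bullet> (col M m - M *\<^sub>v q) = 0" by auto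
  define z where "z = unit_vec d m - q"
  have z: "z \<in> carrier_vec d" using q unfolding z_def by auto
  have Mu: "M *\<^sub>v unit_vec d m = col M m"
    using M md by (intro eq_vecI) (auto simp: row_def col_def scalar_prod_def if_distrib cong: if_cong)
  define e where "e = M *\<^sub>v z"
  have e: "e \<in> carrier_vec r" using M z unfolding e_def by auto
  have ee: "e = col M m - M *\<^sub>v q"
    unfolding e_def z_def using M q Mu by (simp add: mult_minus_distrib_mat_vec)
  have Mq: "M *\<^sub>v q \<in> carrier_vec r" using M q by auto
  have colm: "col M m = e + M *\<^sub>v q" unfolding ee using cm Mq by auto
  define u where "u = c - M *\<^sub>v x"
  have u: "u \<in> carrier_vec r" using Suc.prems M x unfolding u_def by auto
  have eo: "\<And>j. j < m \<Longrightarrow> col M j \<bullet> e = 0" using qo ee by simp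
  show ?case
  proof (cases "e \<bullet> e = 0")
    case True
    hence e0: "e = 0\<^sub>v r" using sp_self_eq0 e by blast
    have "col M m = M *\<^sub>v q" using colm e0 Mq by auto
    hence "col M m \<bullet> u = 0"
      using key_orth[OF M q u qs] xo unfolding u_def by auto
    then show ?thesis using x xs xo unfolding u_def
      by (intro bexI[of _ x]) (auto simp: less_Suc_eq)
  next
    case False
    define t where "t = (e \<bullet> u) / (e \<bullet> e)"
    define x' where "x' = x + t \<cdot>\<^sub>v z"
    have x': "x' \<in> carrier_vec d" using x z unfolding x'_def by auto
    have Mx': "M *\<^sub>v x' = M *\<^sub>v x + t \<cdot>\<^sub>v e"
      unfolding x'_def e_def using M x z by (simp add: mult_add_distrib_mat_vec mult_mat_vec)
    have u': "c - M *\<^sub>v x' = u - t \<cdot>\<^sub>v e"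
      unfolding Mx' u_def using Suc.prems M x e by (intro eq_vecI) auto
    have u'c: "u - t \<cdot>\<^sub>v e \<in> carrier_vec r" using u e by auto
    have o1: "col M j \<bullet> (u - t \<cdot>\<^sub>v e) = 0" if j: "j < m" for j
    proof -
      have cj: "col M j \<in> carrier_vec r" using M j md by auto
      have "col M j \<bullet> (u - t \<cdot>\<^sub>v e) = col M j \<bullet> u - t * (col M j \<bullet> e)"
        using cj u e by (simp add: scalar_prod_minus_distrib[of _ r])
      also have "\<dots> = 0" using xo[OF j] eo[OF j] unfolding u_def by simp
      finally show ?thesis .
    qed
    have o2: "col M m \<bullet> (u - t \<cdot>\<^sub>v e) = 0"
    proof -
      have "col M m \<bullet> (u - t \<cdot>\<^sub>v e) = e \<bullet> (u - t \<cdot>\<^sub>v e) + (M *\<^sub>v q) \<bullet> (u - t \<cdot>\<^sub>v e)"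
        unfolding colm using e Mq u'c by (simp add: add_scalar_prod_distrib[of _ r])
      also have "(M *\<^sub>v q) \<bullet> (u - t \<cdot>\<^sub>v e) = 0"
        using key_orth[OF M q u'c qs] o1 by auto
      also have "e \<bullet> (u - t \<cdot>\<^sub>v e) = e \<bullet> u - t * (e \<bullet> e)"
        using e u by (simp add: scalar_prod_minus_distrib[of _ r])
      also have "\<dots> = 0" unfolding t_def using False by simp
      finally show ?thesis by simp
    qed
    have xs': "x' $ j = 0" if "Suc m \<le> j" "j < d" for j
      using that x z q xs qs unfolding x'_def z_def by auto
    show ?thesis
      using x' xs' o1 o2 u' by (intro bexI[of _ x']) (auto simp: less_Suc_eq)
  qed
qed

lemma ls_exists:
  fixes M :: "real mat"
  assumes M: "M \<in> carrier_mat r d" and c: "c \<in> carrier_vec r"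
  shows "\<exists>x\<in>carrier_vec d. transpose_mat M *\<^sub>v (M *\<^sub>v x) = transpose_mat M *\<^sub>v c"
proof -
  obtain x where x: "x \<in> carrier_vec d" and xo: "\<And>j. j < d \<Longrightarrow> col M j \<bullet> (c - M *\<^sub>v x) = 0"
    using ls_aux[OF M order.refl c] by auto
  have "transpose_mat M *\<^sub>v (M *\<^sub>v x) = transpose_mat M *\<^sub>v c"
  proof (rule eq_vecI)
    fix j assume "j < dim_vec (transpose_mat M *\<^sub>v c)"
    hence j: "j < d" using M by auto
    have cj: "col M j \<in> carrier_vec r" using M j by auto
    have "col M j \<bullet> c - col M j \<bullet> (M *\<^sub>v x) = 0"
      using xo[OF j] cj c M x by (simp add: scalar_prod_minus_distrib[of _ r])
    thus "(transpose_mat M *\<^sub>v (M *\<^sub>v x)) $ j = (transpose_mat M *\<^sub>v c) $ j"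
      using j M by auto
  qed (use M in auto)
  with x show ?thesis by auto
qed



fun Gm :: "(nat \<Rightarrow> real mat) \<Rightarrow> nat \<Rightarrow> nat \<Rightarrow> real mat" where
  "Gm A d 0 = 0\<^sub>m d d"
| "Gm A d (Suc m) = transpose_mat (A (Suc m)) * A (Suc m) + Gm A d m"

fun hm :: "(nat \<Rightarrow> real mat) \<Rightarrow> (nat \<Rightarrow> real vec) \<Rightarrow> nat \<Rightarrow> nat \<Rightarrow> real vec" where
  "hm A b d 0 = 0\<^sub>v d"
| "hm A b d (Suc m) = transpose_mat (A (Suc m)) *\<^sub>v b (Suc m) + hm A b d m"

lemma atLeastAtMost_Suc1: "{1..Suc m} = insert (Suc m) {1..m}" by auto

lemma Gm_props:
  assumes dimA: "\<And>i. i \<in> {1..m} \<Longrightarrow> A i \<in> carrier_mat (r i) d"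
  shows "Gm A d m \<in> carrier_mat d d \<and> transpose_mat (Gm A d m) = Gm A d m \<and>
    (\<forall>v\<in>carrier_vec d. \<forall>x\<in>carrier_vec d. v \<bullet> (Gm A d m *\<^sub>v x) = (\<Sum>i\<in>{1..m}. (A i *\<^sub>v v) \<bullet> (A i *\<^sub>v x)))"
  using dimA
proof (induction m)
  case 0
  have "0\<^sub>m d d *\<^sub>v x = 0\<^sub>v d" if "x \<in> carrier_vec d" for x :: "real vec"
    using that by (intro eq_vecI) (auto simp: scalar_prod_def)
  then show ?case by auto
next
  case (Suc m)
  have IH: "Gm A d m \<in> carrier_mat d d" "transpose_mat (Gm A d m) = Gm A d m"
    "\<And>v x. v\<in>carrier_vec d \<Longrightarrow> x\<in>carrier_vec d \<Longrightarrow> v \<bullet> (Gm A d m *\<^sub>v x) = (\<Sum>i\<in>{1..m}. (A i *\<^sub>v v) \<bullet> (A i *\<^sub>v x))"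
    using Suc by auto
  have As: "A (Suc m) \<in> carrier_mat (r (Suc m)) d" using Suc.prems by auto
  let ?T = "transpose_mat (A (Suc m)) * A (Suc m)"
  have T: "?T \<in> carrier_mat d d" using As by auto
  have c: "Gm A d (Suc m) \<in> carrier_mat d d" using T IH by auto
  have tr: "transpose_mat (Gm A d (Suc m)) = Gm A d (Suc m)"
    using T IH As by (simp add: transpose_add[of _ d d] transpose_mult[of _ d "r (Suc m)"])
  have sp: "v \<bullet> (Gm A d (Suc m) *\<^sub>v x) = (\<Sum>i\<in>{1..Suc m}. (A i *\<^sub>v v) \<bullet> (A i *\<^sub>v x))"
    if v: "v\<in>carrier_vec d" and x: "x\<in>carrier_vec d" for v x
  proof -
    have "v \<bullet> (Gm A d (Suc m) *\<^sub>v x) = v \<bullet> (?T *\<^sub>v x) + v \<bullet> (Gm A d m *\<^sub>v x)"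
      using T IH v x by (simp add: add_mult_distrib_mat_vec[of _ d d] scalar_prod_add_distrib[of _ d])
    also have "v \<bullet> (?T *\<^sub>v x) = (A (Suc m) *\<^sub>v v) \<bullet> (A (Suc m) *\<^sub>v x)"
    proof -
      have "v \<bullet> (?T *\<^sub>v x) = v \<bullet> (transpose_mat (A (Suc m)) *\<^sub>v (A (Suc m) *\<^sub>v x))"
        using As x by simp
      also have "\<dots> = (transpose_mat (A (Suc m)) *\<^sub>v (A (Suc m) *\<^sub>v x)) \<bullet> v"
        using As x v by (intro comm_scalar_prod[of _ d]) auto
      also have "\<dots> = (A (Suc m) *\<^sub>v x) \<bullet> (A (Suc m) *\<^sub>v v)"
        using transpose_vec_mult_scalar[OF As v, of "A (Suc m) *\<^sub>v x"] As x by simp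
      also have "\<dots> = (A (Suc m) *\<^sub>v v) \<bullet> (A (Suc m) *\<^sub>v x)"
        using As x v by (intro comm_scalar_prod[of _ "r (Suc m)"]) auto
      finally show ?thesis .
    qed
    also have "v \<bullet> (Gm A d m *\<^sub>v x) = (\<Sum>i\<in>{1..m}. (A i *\<^sub>v v) \<bullet> (A i *\<^sub>v x))"
      using IH v x by auto
    finally show ?thesis unfolding atLeastAtMost_Suc1 by simp
  qed
  show ?case using c tr sp by auto
qed

lemma hm_props:
  assumes dimA: "\<And>i. i \<in> {1..m} \<Longrightarrow> A i \<in> carrier_mat (r i) d"
    and dimb: "\<And>i. i \<in> {1..m} \<Longrightarrow> b i \<in> carrier_vec (r i)"
  shows "hm A b d m \<in> carrier_vec d \<and>
    (\<forall>v\<in>carrier_vec d. v \<bullet> hm A b d m = (\<Sum>i\<in>{1..m}. (A i *\<^sub>v v) \<bullet> b i))"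
  using dimA dimb
proof (induction m)
  case 0
  then show ?case by auto
next
  case (Suc m)
  have IH: "hm A b d m \<in> carrier_vec d"
    "\<And>v. v\<in>carrier_vec d \<Longrightarrow> v \<bullet> hm A b d m = (\<Sum>i\<in>{1..m}. (A i *\<^sub>v v) \<bullet> b i)"
    using Suc by auto
  have As: "A (Suc m) \<in> carrier_mat (r (Suc m)) d" and bs: "b (Suc m) \<in> carrier_vec (r (Suc m))"
    using Suc.prems by auto
  let ?t = "transpose_mat (A (Suc m)) *\<^sub>v b (Suc m)"
  have t: "?t \<in> carrier_vec d" using As bs by (metis transpose_carrier_mat mult_mat_vec_carrier)
  have sp: "v \<bullet> hm A b d (Suc m) = (\<Sum>i\<in>{1..Suc m}. (A i *\<^sub>v v) \<bullet> b i)"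
    if v: "v\<in>carrier_vec d" for v
  proof -
    have "v \<bullet> hm A b d (Suc m) = v \<bullet> ?t + v \<bullet> hm A b d m"
      using t IH v by (simp add: scalar_prod_add_distrib[of _ d])
    also have "v \<bullet> ?t = ?t \<bullet> v" using t v by (intro comm_scalar_prod[of _ d]) auto
    also have "\<dots> = b (Suc m) \<bullet> (A (Suc m) *\<^sub>v v)"
      using transpose_vec_mult_scalar[OF As v bs] .
    also have "\<dots> = (A (Suc m) *\<^sub>v v) \<bullet> b (Suc m)"
      using As v bs by (intro comm_scalar_prod[of _ "r (Suc m)"]) auto
    finally show ?thesis unfolding atLeastAtMost_Suc1 using IH v by simp
  qed
  show ?case using t IH sp by auto
qed

lemma ls_exists_family:
  fixes A :: "nat \<Rightarrow> real mat" and b :: "nat \<Rightarrow> real vec"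
  assumes dimA: "\<And>i. i \<in> {1..m} \<Longrightarrow> A i \<in> carrier_mat (r i) d"
    and dimb: "\<And>i. i \<in> {1..m} \<Longrightarrow> b i \<in> carrier_vec (r i)"
  shows "\<exists>x\<in>carrier_vec d. \<forall>v\<in>carrier_vec d. (\<Sum>i\<in>{1..m}. (A i *\<^sub>v v) \<bullet> (A i *\<^sub>v x - b i)) = 0"
proof -
  let ?G = "Gm A d m" and ?h = "hm A b d m"
  have G: "?G \<in> carrier_mat d d" and Gt: "transpose_mat ?G = ?G"
    and GI: "\<And>v x. v\<in>carrier_vec d \<Longrightarrow> x\<in>carrier_vec d \<Longrightarrow> v \<bullet> (?G *\<^sub>v x) = (\<Sum>i\<in>{1..m}. (A i *\<^sub>v v) \<bullet> (A i *\<^sub>v x))"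
    using Gm_props[OF dimA] by auto
  have h: "?h \<in> carrier_vec d"
    and hI: "\<And>v. v\<in>carrier_vec d \<Longrightarrow> v \<bullet> ?h = (\<Sum>i\<in>{1..m}. (A i *\<^sub>v v) \<bullet> b i)"
    using hm_props[OF dimA dimb] by auto
  obtain x where x: "x \<in> carrier_vec d" and xe: "?G *\<^sub>v (?G *\<^sub>v x) = ?G *\<^sub>v ?h"
    using ls_exists[OF G h] Gt by auto
  define w where "w = ?G *\<^sub>v x - ?h"
  have w: "w \<in> carrier_vec d" unfolding w_def using G x h by auto
  have Gw: "?G *\<^sub>v w = 0\<^sub>v d"
    unfolding w_def using G x h xe by (simp add: mult_minus_distrib_mat_vec[of _ d d])
  have "(\<Sum>i\<in>{1..m}. (A i *\<^sub>v w) \<bullet> (A i *\<^sub>v w)) = 0"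
    using GI[OF w w] Gw w by simp
  hence Aw0: "(A i *\<^sub>v w) \<bullet> (A i *\<^sub>v w) = 0" if "i \<in> {1..m}" for i
    using that by (subst (asm) sum_nonneg_eq_0_iff) (auto intro: sp_self_ge0)
  have Aw: "A i *\<^sub>v w = 0\<^sub>v (r i)" if i: "i \<in> {1..m}" for i
    using sp_self_eq0[OF _ Aw0[OF i]] dimA[OF i] w by auto
  have "(\<Sum>i\<in>{1..m}. (A i *\<^sub>v w) \<bullet> (A i *\<^sub>v x)) = 0"
  proof (rule sum.neutral, intro ballI)
    fix i assume i: "i \<in> {1..m}"
    have "A i *\<^sub>v x \<in> carrier_vec (r i)" using dimA[OF i] x by auto
    thus "(A i *\<^sub>v w) \<bullet> (A i *\<^sub>v x) = 0" using Aw[OF i] by simp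
  qed
  hence wG: "w \<bullet> (?G *\<^sub>v x) = 0" using GI[OF w x] by simp
  have "(\<Sum>i\<in>{1..m}. (A i *\<^sub>v w) \<bullet> b i) = 0"
  proof (rule sum.neutral, intro ballI)
    fix i assume i: "i \<in> {1..m}"
    show "(A i *\<^sub>v w) \<bullet> b i = 0" using Aw[OF i] dimb[OF i] by simp
  qed
  hence wh: "w \<bullet> ?h = 0" using hI[OF w] by simp
  have "w \<bullet> w = 0"
  proof -
    have Gx: "?G *\<^sub>v x \<in> carrier_vec d" using G x by auto
    have "w \<bullet> w = w \<bullet> (?G *\<^sub>v x) - w \<bullet> ?h"
      using scalar_prod_minus_distrib[OF w Gx h] unfolding w_def by simp
    thus ?thesis using wG wh by simp
  qed
  hence w0: "w = 0\<^sub>v d" using sp_self_eq0 w by blast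
  have Gxh: "?G *\<^sub>v x = ?h"
  proof -
    have "?G *\<^sub>v x = w + ?h" unfolding w_def using G x h by (intro eq_vecI) auto
    thus ?thesis using w0 h by simp
  qed
  show ?thesis
  proof (intro bexI[OF _ x] ballI)
    fix v :: "real vec" assume v: "v \<in> carrier_vec d"
    have "(\<Sum>i\<in>{1..m}. (A i *\<^sub>v v) \<bullet> (A i *\<^sub>v x - b i)) =
          (\<Sum>i\<in>{1..m}. (A i *\<^sub>v v) \<bullet> (A i *\<^sub>v x) - (A i *\<^sub>v v) \<bullet> b i)"
    proof (rule sum.cong[OF refl])
      fix i assume i: "i \<in> {1..m}"
      have c1: "A i *\<^sub>v v \<in> carrier_vec (r i)" "A i *\<^sub>v x \<in> carrier_vec (r i)"
        using dimA[OF i] v x by auto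
      show "(A i *\<^sub>v v) \<bullet> (A i *\<^sub>v x - b i) = (A i *\<^sub>v v) \<bullet> (A i *\<^sub>v x) - (A i *\<^sub>v v) \<bullet> b i"
        using scalar_prod_minus_distrib[OF c1 dimb[OF i]] .
    qed
    also have "\<dots> = v \<bullet> (?G *\<^sub>v x) - v \<bullet> ?h"
      using GI[OF v x] hI[OF v] by (simp add: sum_subtractf)
    finally show "(\<Sum>i\<in>{1..m}. (A i *\<^sub>v v) \<bullet> (A i *\<^sub>v x - b i)) = 0" using Gxh by simp
  qed
qed



lemma quad_neg:
  fixes \<alpha> \<beta> :: real
  assumes "\<beta> \<ge> 0" "\<alpha> \<noteq> 0"
  shows "2 * ((-\<alpha>/(\<beta>+1)) * \<alpha>) + (-\<alpha>/(\<beta>+1)) * (-\<alpha>/(\<beta>+1)) * \<beta> < 0"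
proof -
  define t where "t = -\<alpha>/(\<beta>+1)"
  have b1: "\<beta> + 1 > 0" using assms by simp
  have ta: "t * (\<beta>+1) = -\<alpha>" unfolding t_def using b1 by simp
  have "(2 * (t * \<alpha>) + t * t * \<beta>) * ((\<beta>+1)*(\<beta>+1)) = - (\<alpha>*\<alpha>*(\<beta>+2))"
  proof -
    have "(2 * (t * \<alpha>) + t * t * \<beta>) * ((\<beta>+1)*(\<beta>+1)) = 2 * (t*(\<beta>+1)) * \<alpha> * (\<beta>+1) + (t*(\<beta>+1)) * (t*(\<beta>+1)) * \<beta>"
      by (simp add: algebra_simps)
    also have "\<dots> = - (\<alpha>*\<alpha>*(\<beta>+2))" unfolding ta by (simp add: algebra_simps)
    finally show ?thesis .
  qed
  moreover have "\<alpha>*\<alpha>*(\<beta>+2) > 0"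
  proof -
    have "\<alpha>*\<alpha> > 0" using assms by (auto simp: zero_less_mult_iff linorder_neq_iff)
    moreover have "\<beta>+2 > 0" using assms by simp
    ultimately show ?thesis by (rule mult_pos_pos)
  qed
  moreover have "(\<beta>+1)*(\<beta>+1) > 0" using b1 by simp
  ultimately have "2 * (t * \<alpha>) + t * t * \<beta> < 0"
    by (metis mult_less_0_iff neg_less_0_iff_less order_less_asym)
  thus ?thesis unfolding t_def .
qed

lemma sqn_exp:
  fixes A :: "real mat"
  assumes A: "A \<in> carrier_mat r d" and b: "b \<in> carrier_vec r"
    and x: "x \<in> carrier_vec d" and v: "v \<in> carrier_vec d"
  shows "sqn (A *\<^sub>v (x + v) - b) = sqn (A *\<^sub>v x - b) + 2 * ((A *\<^sub>v v) \<bullet> (A *\<^sub>v x - b)) + (A *\<^sub>v v) \<bullet> (A *\<^sub>v v)"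
proof -
  define a where "a = A *\<^sub>v x - b"
  define p where "p = A *\<^sub>v v"
  have a: "a \<in> carrier_vec r" and p: "p \<in> carrier_vec r" using A b x v unfolding a_def p_def by auto
  have "A *\<^sub>v (x + v) - b = a + p"
    unfolding a_def p_def using A b x v by (intro eq_vecI) (auto simp: mult_add_distrib_mat_vec[of _ r d])
  hence "sqn (A *\<^sub>v (x + v) - b) = (a + p) \<bullet> (a + p)" unfolding sqn_def by simp
  also have "\<dots> = a \<bullet> a + a \<bullet> p + (p \<bullet> a + p \<bullet> p)"
    using a p by (simp add: add_scalar_prod_distrib[of _ r] scalar_prod_add_distrib[of _ r])
  also have "a \<bullet> p = p \<bullet> a" using a p by (rule comm_scalar_prod)
  finally show ?thesis unfolding sqn_def a_def[symmetric] p_def[symmetric] by simp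
qed

lemma cost_exp:
  fixes A :: "nat \<Rightarrow> real mat" and b :: "nat \<Rightarrow> real vec"
  assumes dimA: "\<And>i. i \<in> S \<Longrightarrow> A i \<in> carrier_mat (r i) d"
    and dimb: "\<And>i. i \<in> S \<Longrightarrow> b i \<in> carrier_vec (r i)"
    and x: "x \<in> carrier_vec d" and v: "v \<in> carrier_vec d"
  shows "cost A b S (x + v) = cost A b S x + 2 * (\<Sum>i\<in>S. (A i *\<^sub>v v) \<bullet> (A i *\<^sub>v x - b i))
     + (\<Sum>i\<in>S. (A i *\<^sub>v v) \<bullet> (A i *\<^sub>v v))"
proof -
  have "cost A b S (x + v) = (\<Sum>i\<in>S. sqn (A i *\<^sub>v x - b i) + 2 * ((A i *\<^sub>v v) \<bullet> (A i *\<^sub>v x - b i)) + (A i *\<^sub>v v) \<bullet> (A i *\<^sub>v v))"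
    unfolding cost_def by (rule sum.cong[OF refl], rule sqn_exp[OF dimA dimb x v])
  thus ?thesis unfolding cost_def by (simp add: sum.distrib sum_distrib_left)
qed

lemma argmin_char:
  fixes A :: "nat \<Rightarrow> real mat" and b :: "nat \<Rightarrow> real vec"
  assumes dimA: "\<And>i. i \<in> S \<Longrightarrow> A i \<in> carrier_mat (r i) d"
    and dimb: "\<And>i. i \<in> S \<Longrightarrow> b i \<in> carrier_vec (r i)"
  shows "x \<in> argmin_set d (cost A b S) \<longleftrightarrow>
    x \<in> carrier_vec d \<and> (\<forall>v\<in>carrier_vec d. (\<Sum>i\<in>S. (A i *\<^sub>v v) \<bullet> (A i *\<^sub>v x - b i)) = 0)"
proof
  assume xm: "x \<in> argmin_set d (cost A b S)"
  hence x: "x \<in> carrier_vec d" and min: "\<And>y. y \<in> carrier_vec d \<Longrightarrow> cost A b S x \<le> cost A b S y"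
    unfolding argmin_set_def by auto
  show "x \<in> carrier_vec d \<and> (\<forall>v\<in>carrier_vec d. (\<Sum>i\<in>S. (A i *\<^sub>v v) \<bullet> (A i *\<^sub>v x - b i)) = 0)"
  proof (intro conjI x ballI, rule ccontr)
    fix v :: "real vec" assume v: "v \<in> carrier_vec d"
    define \<alpha> where "\<alpha> = (\<Sum>i\<in>S. (A i *\<^sub>v v) \<bullet> (A i *\<^sub>v x - b i))"
    define \<beta> where "\<beta> = (\<Sum>i\<in>S. (A i *\<^sub>v v) \<bullet> (A i *\<^sub>v v))"
    assume "(\<Sum>i\<in>S. (A i *\<^sub>v v) \<bullet> (A i *\<^sub>v x - b i)) \<noteq> 0"
    hence a0: "\<alpha> \<noteq> 0" unfolding \<alpha>_def .
    have b0: "\<beta> \<ge> 0" unfolding \<beta>_def by (intro sum_nonneg sp_self_ge0)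
    define t where "t = -\<alpha>/(\<beta>+1)"
    have tv: "t \<cdot>\<^sub>v v \<in> carrier_vec d" using v by auto
    have e1: "(\<Sum>i\<in>S. (A i *\<^sub>v (t \<cdot>\<^sub>v v)) \<bullet> (A i *\<^sub>v x - b i)) = t * \<alpha>"
      unfolding \<alpha>_def sum_distrib_left
    proof (rule sum.cong[OF refl])
      fix i assume i: "i \<in> S"
      have "A i *\<^sub>v (t \<cdot>\<^sub>v v) = t \<cdot>\<^sub>v (A i *\<^sub>v v)" using mult_mat_vec[OF dimA[OF i] v] .
      thus "(A i *\<^sub>v (t \<cdot>\<^sub>v v)) \<bullet> (A i *\<^sub>v x - b i) = t * ((A i *\<^sub>v v) \<bullet> (A i *\<^sub>v x - b i))"
        using dimA[OF i] dimb[OF i] x v by simp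
    qed
    have e2: "(\<Sum>i\<in>S. (A i *\<^sub>v (t \<cdot>\<^sub>v v)) \<bullet> (A i *\<^sub>v (t \<cdot>\<^sub>v v))) = t * t * \<beta>"
      unfolding \<beta>_def sum_distrib_left
    proof (rule sum.cong[OF refl])
      fix i assume i: "i \<in> S"
      have "A i *\<^sub>v (t \<cdot>\<^sub>v v) = t \<cdot>\<^sub>v (A i *\<^sub>v v)" using mult_mat_vec[OF dimA[OF i] v] .
      thus "(A i *\<^sub>v (t \<cdot>\<^sub>v v)) \<bullet> (A i *\<^sub>v (t \<cdot>\<^sub>v v)) = t * t * ((A i *\<^sub>v v) \<bullet> (A i *\<^sub>v v))"
        using dimA[OF i] v by simp
    qed
    have "cost A b S (x + t \<cdot>\<^sub>v v) = cost A b S x + (2 * (t * \<alpha>) + t * t * \<beta>)"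
      using cost_exp[where S=S and A=A and b=b and r=r and d=d, OF dimA dimb x tv] unfolding e1 e2 by simp
    moreover have "2 * (t * \<alpha>) + t * t * \<beta> < 0" unfolding t_def using quad_neg[OF b0 a0] .
    moreover have "cost A b S x \<le> cost A b S (x + t \<cdot>\<^sub>v v)" by (rule min, rule add_carrier_vec[OF x tv])
    ultimately show False by linarith
  qed
next
  assume h: "x \<in> carrier_vec d \<and> (\<forall>v\<in>carrier_vec d. (\<Sum>i\<in>S. (A i *\<^sub>v v) \<bullet> (A i *\<^sub>v x - b i)) = 0)"
  hence x: "x \<in> carrier_vec d" by auto
  show "x \<in> argmin_set d (cost A b S)"
    unfolding argmin_set_def
  proof (intro CollectI conjI x ballI)
    fix y :: "real vec" assume y: "y \<in> carrier_vec d"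
    have yx: "y - x \<in> carrier_vec d" using x y by auto
    have yy: "x + (y - x) = y" using x y by (intro eq_vecI) auto
    have h0: "(\<Sum>i\<in>S. (A i *\<^sub>v (y - x)) \<bullet> (A i *\<^sub>v x - b i)) = 0" using h yx by blast
    have "cost A b S y = cost A b S x + 2 * 0 + (\<Sum>i\<in>S. (A i *\<^sub>v (y - x)) \<bullet> (A i *\<^sub>v (y - x)))"
      using cost_exp[where S=S and A=A and b=b and r=r and d=d, OF dimA dimb x yx] unfolding yy h0 .
    moreover have "(\<Sum>i\<in>S. (A i *\<^sub>v (y - x)) \<bullet> (A i *\<^sub>v (y - x))) \<ge> 0"
      by (intro sum_nonneg sp_self_ge0)
    ultimately show "cost A b S x \<le> cost A b S y" by linarith
  qed
qed

lemma comb: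
  fixes f :: "nat \<Rightarrow> real"
  assumes all: "\<And>S. S \<subseteq> {1..n} \<Longrightarrow> card S = m \<Longrightarrow> sum f S = 0"
    and m1: "1 \<le> m" and mn: "m < n"
  shows "\<forall>i\<in>{1..n}. f i = 0"
proof -
  have eq: "f i = f j" if i: "i \<in> {1..n}" and j: "j \<in> {1..n}" and ij: "i \<noteq> j" for i j
  proof -
    have sub: "{i, j} \<subseteq> {1..n}" using i j by auto
    have c2: "card {i, j} = 2" using ij by simp
    have "card ({1..n} - {i, j}) = n - 2" using card_Diff_subset[OF _ sub] c2 by simp
    hence "m - 1 \<le> card ({1..n} - {i, j})" using mn by simp
    then obtain T where T: "T \<subseteq> {1..n} - {i, j}" "card T = m - 1"
      using obtain_subset_with_card_n by metis
    have fT: "finite T" using T(1) finite_subset by blast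
    have iT: "i \<notin> T" and jT: "j \<notin> T" using T(1) by auto
    have s1: "insert i T \<subseteq> {1..n}" "insert j T \<subseteq> {1..n}" using T(1) i j by auto
    have c1: "card (insert i T) = m" "card (insert j T) = m"
      using card_insert_disjoint[OF fT iT] card_insert_disjoint[OF fT jT] T(2) m1 by simp_all
    have "sum f (insert i T) = 0" by (rule all[OF s1(1) c1(1)])
    moreover have "sum f (insert j T) = 0" by (rule all[OF s1(2) c1(2)])
    moreover have "sum f (insert i T) = f i + sum f T" using sum.insert[OF fT iT] .
    moreover have "sum f (insert j T) = f j + sum f T" using sum.insert[OF fT jT] .
    ultimately show ?thesis by linarith
  qed
  have n1: "1 \<in> {1..n}" using m1 mn by auto
  have "sum f {1..m} = 0" by (rule all) (use mn in auto)
  moreover have "sum f {1..m} = sum (\<lambda>_. f 1) {1..m}"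
  proof (rule sum.cong[OF refl])
    fix i assume "i \<in> {1..m}"
    hence i: "i \<in> {1..n}" using mn by auto
    show "f i = f 1" proof (cases "i = 1") case False thus ?thesis using eq[OF i n1] by simp qed simp
  qed
  ultimately have "real m * f 1 = 0" by simp
  hence f1: "f 1 = 0" using m1 by simp
  show ?thesis
  proof
    fix i assume i: "i \<in> {1..n}"
    show "f i = 0" proof (cases "i = 1") case False thus ?thesis using eq[OF i n1] f1 by simp qed (use f1 in simp)
  qed
qed



lemma normal_eq_iff:
  fixes A :: "real mat"
  assumes A: "A \<in> carrier_mat r d" and b: "b \<in> carrier_vec r" and x: "x \<in> carrier_vec d"
  shows "(\<forall>v\<in>carrier_vec d. (A *\<^sub>v v) \<bullet> (A *\<^sub>v x - b) = 0) \<longleftrightarrow>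
     transpose_mat A *\<^sub>v (A *\<^sub>v x) = transpose_mat A *\<^sub>v b"
proof -
  define w where "w = A *\<^sub>v x - b"
  have w: "w \<in> carrier_vec r" using A x b unfolding w_def by auto
  have At: "transpose_mat A \<in> carrier_mat d r" using A by simp
  have Atw: "transpose_mat A *\<^sub>v w \<in> carrier_vec d" using At w by auto
  have Atw_eq: "transpose_mat A *\<^sub>v w = transpose_mat A *\<^sub>v (A *\<^sub>v x) - transpose_mat A *\<^sub>v b"
    unfolding w_def using At A x b by (simp add: mult_minus_distrib_mat_vec[of _ d r])
  have sp: "(A *\<^sub>v v) \<bullet> w = (transpose_mat A *\<^sub>v w) \<bullet> v" if v: "v \<in> carrier_vec d" for v
  proof -
    have "(A *\<^sub>v v) \<bullet> w = w \<bullet> (A *\<^sub>v v)" using A v w by (intro comm_scalar_prod[of _ r]) auto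
    also have "\<dots> = (transpose_mat A *\<^sub>v w) \<bullet> v" using transpose_vec_mult_scalar[OF A v w] by simp
    finally show ?thesis .
  qed
  have c1: "transpose_mat A *\<^sub>v (A *\<^sub>v x) \<in> carrier_vec d" "transpose_mat A *\<^sub>v b \<in> carrier_vec d"
    using At A x b by auto
  show ?thesis
  proof
    assume h: "\<forall>v\<in>carrier_vec d. (A *\<^sub>v v) \<bullet> (A *\<^sub>v x - b) = 0"
    have "(transpose_mat A *\<^sub>v w) \<bullet> (transpose_mat A *\<^sub>v w) = 0"
      using h Atw sp[OF Atw] unfolding w_def by simp
    hence z: "transpose_mat A *\<^sub>v w = 0\<^sub>v d" using sp_self_eq0 Atw by blast
    show "transpose_mat A *\<^sub>v (A *\<^sub>v x) = transpose_mat A *\<^sub>v b"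
    proof (rule eq_vecI)
      fix i assume i: "i < dim_vec (transpose_mat A *\<^sub>v b)"
      have "(transpose_mat A *\<^sub>v w) $ i = 0" using z i c1 A by simp
      thus "(transpose_mat A *\<^sub>v (A *\<^sub>v x)) $ i = (transpose_mat A *\<^sub>v b) $ i"
        unfolding Atw_eq using i c1 by simp
    qed (use c1 in simp)
  next
    assume h: "transpose_mat A *\<^sub>v (A *\<^sub>v x) = transpose_mat A *\<^sub>v b"
    have z: "transpose_mat A *\<^sub>v w = 0\<^sub>v d" unfolding Atw_eq h using c1 by simp
    show "\<forall>v\<in>carrier_vec d. (A *\<^sub>v v) \<bullet> (A *\<^sub>v x - b) = 0"
      using sp z unfolding w_def by simp
  qed
qed

theorem proposition1:
  fixes n d k :: nat and r :: "nat \<Rightarrow> nat"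
    and A :: "nat \<Rightarrow> real mat" and b :: "nat \<Rightarrow> real vec"
  assumes dimA: "\<And>i. i \<in> {1..n} \<Longrightarrow> A i \<in> carrier_mat (r i) d"
    and dimb: "\<And>i. i \<in> {1..n} \<Longrightarrow> b i \<in> carrier_vec (r i)"
    and k_le: "k \<le> n - 1"
    and k_ge: "k \<ge> 1"
    and red: "k_redundant n d A b k"
  shows "argmin_set d (cost A b {1..n}) =
         {x \<in> carrier_vec d. \<forall>i \<in> {1..n}.
            transpose_mat (A i) *\<^sub>v (A i *\<^sub>v x) = transpose_mat (A i) *\<^sub>v b i}"
proof -
  define m where "m = n - k"
  have m1: "1 \<le> m" and mn: "m < n" using k_le k_ge unfolding m_def by auto
  let ?a = "\<lambda>x v i. (A i *\<^sub>v v) \<bullet> (A i *\<^sub>v x - b i)"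
  have dimA': "\<And>i. i \<in> {1..m} \<Longrightarrow> A i \<in> carrier_mat (r i) d" using dimA mn by auto
  have dimb': "\<And>i. i \<in> {1..m} \<Longrightarrow> b i \<in> carrier_vec (r i)" using dimb mn by auto
  obtain x0 where x0: "x0 \<in> carrier_vec d"
    and x0o: "\<And>v. v \<in> carrier_vec d \<Longrightarrow> (\<Sum>i\<in>{1..m}. ?a x0 v i) = 0"
    using ls_exists_family[where m=m and A=A and b=b and r=r and d=d, OF dimA' dimb'] by blast
  have x0m: "x0 \<in> argmin_set d (cost A b {1..m})"
    using argmin_char[where S="{1..m}" and A=A and b=b and r=r and d=d, OF dimA' dimb'] x0 x0o by blast
  have allS: "(\<Sum>i\<in>S. ?a x0 v i) = 0" if S: "S \<subseteq> {1..n}" "card S = m" and v: "v \<in> carrier_vec d" for S v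
  proof -
    have "argmin_set d (cost A b S) = argmin_set d (cost A b {1..m})"
    proof -
      have "card {1..m} = n - k" unfolding m_def by simp
      moreover have "{1..m} \<subseteq> {1..n}" using mn by auto
      moreover have "card S = n - k" using S(2) unfolding m_def .
      ultimately show ?thesis using red S(1) unfolding k_redundant_def by blast
    qed
    hence "x0 \<in> argmin_set d (cost A b S)" using x0m by simp
    moreover have dA: "\<And>i. i \<in> S \<Longrightarrow> A i \<in> carrier_mat (r i) d" using dimA S by auto
    moreover have dB: "\<And>i. i \<in> S \<Longrightarrow> b i \<in> carrier_vec (r i)" using dimb S by auto
    ultimately show ?thesis
      using argmin_char[where S=S and A=A and b=b and r=r and d=d, OF dA dB] v by blast
  qed
  have x0i: "\<forall>i\<in>{1..n}. ?a x0 v i = 0" if v: "v \<in> carrier_vec d" for v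
    by (rule comb[OF _ m1 mn]) (rule allS[OF _ _ v])
  define R where "R = {x \<in> carrier_vec d. \<forall>i \<in> {1..n}. \<forall>v\<in>carrier_vec d. ?a x v i = 0}"
  have R_eq: "R = {x \<in> carrier_vec d. \<forall>i \<in> {1..n}.
            transpose_mat (A i) *\<^sub>v (A i *\<^sub>v x) = transpose_mat (A i) *\<^sub>v b i}"
    unfolding R_def
  proof (intro Collect_cong conj_cong refl ball_cong)
    fix x :: "real vec" and i assume "x \<in> carrier_vec d" "i \<in> {1..n}"
    then show "(\<forall>v\<in>carrier_vec d. ?a x v i = 0) = (transpose_mat (A i) *\<^sub>v (A i *\<^sub>v x) = transpose_mat (A i) *\<^sub>v b i)"
      using normal_eq_iff[OF dimA dimb] by simp
  qed
  have single: "x \<in> argmin_set d (cost A b {i}) \<longleftrightarrow> x \<in> carrier_vec d \<and> (\<forall>v\<in>carrier_vec d. ?a x v i = 0)"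
    if i: "i \<in> {1..n}" for i x
  proof -
    have dA: "\<And>j. j \<in> {i} \<Longrightarrow> A j \<in> carrier_mat (r j) d" using dimA i by auto
    have dB: "\<And>j. j \<in> {i} \<Longrightarrow> b j \<in> carrier_vec (r j)" using dimb i by auto
    show ?thesis using argmin_char[where S="{i}" and A=A and b=b and r=r and d=d, OF dA dB] by simp
  qed
  have full: "x \<in> argmin_set d (cost A b {1..n}) \<longleftrightarrow> x \<in> carrier_vec d \<and> (\<forall>v\<in>carrier_vec d. (\<Sum>i\<in>{1..n}. ?a x v i) = 0)" for x
    by (rule argmin_char[where S="{1..n}" and A=A and b=b and r=r and d=d, OF dimA dimb])
  have "argmin_set d (cost A b {1..n}) = R"
  proof
    show "R \<subseteq> argmin_set d (cost A b {1..n})"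
    proof
      fix x :: "real vec" assume "x \<in> R"
      hence "x \<in> carrier_vec d" "\<And>v. v\<in>carrier_vec d \<Longrightarrow> (\<Sum>i\<in>{1..n}. ?a x v i) = 0"
        unfolding R_def by auto
      thus "x \<in> argmin_set d (cost A b {1..n})" using full by blast
    qed
  next
    show "argmin_set d (cost A b {1..n}) \<subseteq> R"
    proof
      fix x :: "real vec" assume xm: "x \<in> argmin_set d (cost A b {1..n})"
      have x: "x \<in> carrier_vec d" using xm unfolding argmin_set_def by auto
      have x0f: "x0 \<in> argmin_set d (cost A b {1..n})" using full x0 x0i by simp
      have "cost A b {1..n} x \<le> cost A b {1..n} x0" using xm x0 unfolding argmin_set_def by blast
      moreover have "cost A b {1..n} x0 \<le> cost A b {1..n} x" using x0f x unfolding argmin_set_def by blast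
      ultimately have ceq: "cost A b {1..n} x = cost A b {1..n} x0" by linarith
      have x0s: "x0 \<in> argmin_set d (cost A b {i})" if "i \<in> {1..n}" for i
        using single[OF that] x0 x0i that by blast
      have le: "sqn (A i *\<^sub>v x0 - b i) \<le> sqn (A i *\<^sub>v x - b i)" if "i \<in> {1..n}" for i
      proof -
        have "cost A b {i} x0 \<le> cost A b {i} x" using x0s[OF that] x unfolding argmin_set_def by blast
        thus ?thesis unfolding cost_def by simp
      qed
      have eqi: "sqn (A i *\<^sub>v x - b i) = sqn (A i *\<^sub>v x0 - b i)" if i: "i \<in> {1..n}" for i
      proof (rule ccontr)
        assume "sqn (A i *\<^sub>v x - b i) \<noteq> sqn (A i *\<^sub>v x0 - b i)"
        hence "sqn (A i *\<^sub>v x0 - b i) < sqn (A i *\<^sub>v x - b i)" using le[OF i] by simp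
        have "(\<Sum>j\<in>{1..n}. sqn (A j *\<^sub>v x0 - b j)) < (\<Sum>j\<in>{1..n}. sqn (A j *\<^sub>v x - b j))"
        proof (rule sum_strict_mono_ex1)
          show "\<forall>j\<in>{1..n}. sqn (A j *\<^sub>v x0 - b j) \<le> sqn (A j *\<^sub>v x - b j)" using le by blast
          show "\<exists>j\<in>{1..n}. sqn (A j *\<^sub>v x0 - b j) < sqn (A j *\<^sub>v x - b j)" using i \<open>sqn (A i *\<^sub>v x0 - b i) < _\<close> by blast
        qed simp
        thus False using ceq unfolding cost_def by simp
      qed
      have "\<forall>v\<in>carrier_vec d. ?a x v i = 0" if i: "i \<in> {1..n}" for i
      proof -
        have "x \<in> argmin_set d (cost A b {i})"
          unfolding argmin_set_def
        proof (intro CollectI conjI x ballI)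
          fix y :: "real vec" assume y: "y \<in> carrier_vec d"
          have "cost A b {i} x0 \<le> cost A b {i} y" using x0s[OF i] y unfolding argmin_set_def by blast
          thus "cost A b {i} x \<le> cost A b {i} y" using eqi[OF i] unfolding cost_def by simp
        qed
        thus ?thesis using single[OF i] by blast
      qed
      thus "x \<in> R" unfolding R_def using x by blast
    qed
  qed
  thus ?thesis using R_eq by simp
qed


end
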